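(* For $r\ge2$ and odd $s\ge3$: $\operatorname{zir}(H(r,s))=2$, $\operatorname{Z}(H(r,s))=r$, and $\operatorname{ZIR}(H(r,s))=r+\frac{s-1}{2}$. For $r\ge2$ and odd $s\ge5$, $\overline{\operatorname{Z}}(H(r,s))=r+1$. For $r\ge2$, $\overline{\operatorname{Z}}(H(r,3))=r$.
   Context: $H(r,s)$ is built as follows: take $K_{2,r}$ with smaller part $\{u,u'\}$ and larger part $\{w_1,\dots,w_r\}$, and the path $P_s$ with vertices $y_1,\dots,y_s$ in path order; identify $u'$ with $y_s$. It has order $r+s+1$. Zero forcing: a blue vertex $u$ changes a white vertex $w$ to blue if $w$ is the only white neighbor of $u$; $B$ is a zero forcing set if from blue set $B$ eventually all vertices are blue; $\operatorname{Z}(G)$ is the minimum size of a zero forcing set and $\overline{\operatorname{Z}}(G)$ the maximum size of an inclusion-minimal zero forcing set. A nonempty $F\subseteq V(G)$ is a fort if every $v\notin F$ has $|N(v)\cap F|\ne1$. A private fort of $x\in S$ relative to $S$ is a fort $F$ with $S\cap F=\{x\}$; $S$ is a ZIr-set if every element of $S$ has a private fort. $\operatorname{zir}(G)$ / $\operatorname{ZIR}(G)$ are the minimum / maximum cardinality of an inclusion-maximal ZIr-set. *)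

theory Defs
  imports Main
begin

definition nbhd :: "'a set \<Rightarrow> ('a \<Rightarrow> 'a \<Rightarrow> bool) \<Rightarrow> 'a \<Rightarrow> 'a set" where
  "nbhd V E v = {w \<in> V. E v w}"

text \<open>Vertices eventually coloured blue starting from blue set B, by the zero forcing
  colour change rule (a blue vertex u forces w if w is its only white neighbour).\<close>
inductive_set zf_closure :: "'a set \<Rightarrow> ('a \<Rightarrow> 'a \<Rightarrow> bool) \<Rightarrow> 'a set \<Rightarrow> 'a set"
  for V :: "'a set" and E :: "'a \<Rightarrow> 'a \<Rightarrow> bool" and B :: "'a set" where
  init: "v \<in> B \<Longrightarrow> v \<in> V \<Longrightarrow> v \<in> zf_closure V E B"
| force: "u \<in> zf_closure V E B \<Longrightarrow> w \<in> nbhd V E u \<Longrightarrow>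
          (\<forall>x \<in> nbhd V E u - {w}. x \<in> zf_closure V E B) \<Longrightarrow> w \<in> zf_closure V E B"

definition zf_set :: "'a set \<Rightarrow> ('a \<Rightarrow> 'a \<Rightarrow> bool) \<Rightarrow> 'a set \<Rightarrow> bool" where
  "zf_set V E B \<longleftrightarrow> B \<subseteq> V \<and> zf_closure V E B = V"

definition minimal_zf_set :: "'a set \<Rightarrow> ('a \<Rightarrow> 'a \<Rightarrow> bool) \<Rightarrow> 'a set \<Rightarrow> bool" where
  "minimal_zf_set V E B \<longleftrightarrow> zf_set V E B \<and> (\<forall>B'. B' \<subset> B \<longrightarrow> \<not> zf_set V E B')"

definition Z :: "'a set \<Rightarrow> ('a \<Rightarrow> 'a \<Rightarrow> bool) \<Rightarrow> nat" where
  "Z V E = Min (card ` {B. zf_set V E B})"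

definition Zbar :: "'a set \<Rightarrow> ('a \<Rightarrow> 'a \<Rightarrow> bool) \<Rightarrow> nat" where
  "Zbar V E = Max (card ` {B. minimal_zf_set V E B})"

definition fort :: "'a set \<Rightarrow> ('a \<Rightarrow> 'a \<Rightarrow> bool) \<Rightarrow> 'a set \<Rightarrow> bool" where
  "fort V E F \<longleftrightarrow> F \<noteq> {} \<and> F \<subseteq> V \<and> (\<forall>v \<in> V - F. card (nbhd V E v \<inter> F) \<noteq> 1)"

definition ZIr_set :: "'a set \<Rightarrow> ('a \<Rightarrow> 'a \<Rightarrow> bool) \<Rightarrow> 'a set \<Rightarrow> bool" where
  "ZIr_set V E S \<longleftrightarrow> S \<subseteq> V \<and> (\<forall>x \<in> S. \<exists>F. fort V E F \<and> S \<inter> F = {x})"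

definition maximal_ZIr_set :: "'a set \<Rightarrow> ('a \<Rightarrow> 'a \<Rightarrow> bool) \<Rightarrow> 'a set \<Rightarrow> bool" where
  "maximal_ZIr_set V E S \<longleftrightarrow> ZIr_set V E S \<and> (\<forall>S'. S \<subset> S' \<longrightarrow> S' \<subseteq> V \<longrightarrow> \<not> ZIr_set V E S')"

definition zir :: "'a set \<Rightarrow> ('a \<Rightarrow> 'a \<Rightarrow> bool) \<Rightarrow> nat" where
  "zir V E = Min (card ` {S. maximal_ZIr_set V E S})"

definition ZIR :: "'a set \<Rightarrow> ('a \<Rightarrow> 'a \<Rightarrow> bool) \<Rightarrow> nat" where
  "ZIR V E = Max (card ` {S. maximal_ZIr_set V E S})"

text \<open>Vertices: U = u, W i = w_i (1 \<le> i \<le> r), Y j = y_j (1 \<le> j \<le> s);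
  the vertex u' of K_{2,r} is identified with Y s.\<close>
datatype hvert = U | W nat | Y nat

definition H_V :: "nat \<Rightarrow> nat \<Rightarrow> hvert set" where
  "H_V r s = {U} \<union> W ` {1..r} \<union> Y ` {1..s}"

definition H_E :: "nat \<Rightarrow> nat \<Rightarrow> hvert \<Rightarrow> hvert \<Rightarrow> bool" where
  "H_E r s a b \<longleftrightarrow>
     (\<exists>i \<in> {1..r}. {a, b} = {U, W i} \<or> {a, b} = {Y s, W i}) \<or>
     (\<exists>j \<in> {1..<s}. {a, b} = {Y j, Y (Suc j)})"

end

theory Submission
  imports Defs
begin

lemma zf_closure_sub: "x \<in> zf_closure V E B \<Longrightarrow> x \<in> V"
  by (erule zf_closure.cases) (auto simp: nbhd_def)

lemma zf_iff_forts:
  "zf_set V E B \<longleftrightarrow> B \<subseteq> V \<and> (\<forall>F. fort V E F \<longrightarrow> F \<inter> B \<noteq> {})"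
proof
  assume zf: "zf_set V E B"
  hence BV: "B \<subseteq> V" and cl: "zf_closure V E B = V" by (auto simp: zf_set_def)
  have "F \<inter> B \<noteq> {}" if fF: "fort V E F" for F
  proof
    assume disj: "F \<inter> B = {}"
    have "x \<notin> F" if "x \<in> zf_closure V E B" for x
      using that
    proof (induction rule: zf_closure.induct)
      case (init v) then show ?case using disj by auto
    next
      case (force u w)
      show ?case
      proof
        assume wF: "w \<in> F"
        have "nbhd V E u \<inter> F = {w}" using force.IH force.hyps wF by auto
        moreover have "u \<in> V - F" using force zf_closure_sub by auto
        ultimately have "card (nbhd V E u \<inter> F) \<noteq> 1" using fF unfolding fort_def by blast
        thus False using \<open>nbhd V E u \<inter> F = {w}\<close> by simp
      qed
    qed
    hence "F \<inter> V = {}" using cl by auto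
    thus False using fF unfolding fort_def by auto
  qed
  thus "B \<subseteq> V \<and> (\<forall>F. fort V E F \<longrightarrow> F \<inter> B \<noteq> {})" using BV by auto
next
  assume h: "B \<subseteq> V \<and> (\<forall>F. fort V E F \<longrightarrow> F \<inter> B \<noteq> {})"
  let ?C = "zf_closure V E B"
  have CV: "?C \<subseteq> V" using zf_closure_sub by auto
  have BC: "B \<subseteq> ?C" using h by (auto intro: zf_closure.init)
  show "zf_set V E B"
  proof (rule ccontr)
    assume "\<not> zf_set V E B"
    hence ne: "?C \<noteq> V" using h by (auto simp: zf_set_def)
    have "fort V E (V - ?C)"
      unfolding fort_def
    proof (intro conjI ballI)
      show "V - ?C \<noteq> {}" using ne CV by auto
      show "V - ?C \<subseteq> V" by auto
    next
      fix v assume v: "v \<in> V - (V - ?C)"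
      show "card (nbhd V E v \<inter> (V - ?C)) \<noteq> 1"
      proof
        assume "card (nbhd V E v \<inter> (V - ?C)) = 1"
        then obtain w where w: "nbhd V E v \<inter> (V - ?C) = {w}" by (auto simp: card_1_singleton_iff)
        have "w \<in> ?C"
        proof (rule zf_closure.force[of v])
          show "v \<in> ?C" using v by auto
          show "w \<in> nbhd V E v" using w by auto
          show "\<forall>x\<in>nbhd V E v - {w}. x \<in> ?C" using w by (auto simp: nbhd_def)
        qed
        thus False using w by auto
      qed
    qed
    moreover have "(V - ?C) \<inter> B = {}" using BC by auto
    ultimately show False using h by auto
  qed
qed

lemma zf_mono: "zf_set V E B \<Longrightarrow> B \<subseteq> B' \<Longrightarrow> B' \<subseteq> V \<Longrightarrow> zf_set V E B'"
proof -
  assume a: "zf_set V E B" "B \<subseteq> B'" "B' \<subseteq> V"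
  have "\<forall>F. fort V E F \<longrightarrow> F \<inter> B' \<noteq> {}"
  proof (intro allI impI)
    fix F assume "fort V E F"
    hence "F \<inter> B \<noteq> {}" using a(1) unfolding zf_iff_forts by blast
    thus "F \<inter> B' \<noteq> {}" using a(2) by blast
  qed
  thus ?thesis using a(3) unfolding zf_iff_forts by blast
qed

locale HG =
  fixes r s :: nat
  assumes r2: "2 \<le> r" and s3: "3 \<le> s"
begin

abbreviation "VV \<equiv> H_V r s"
abbreviation "EE \<equiv> H_E r s"
abbreviation "NN \<equiv> nbhd VV EE"
abbreviation "WR \<equiv> W ` {1..r}"

lemma finV: "finite VV" by (simp add: H_V_def)

lemma nb_U: "NN U = WR"
  unfolding nbhd_def H_V_def H_E_def using s3 by (auto simp: doubleton_eq_iff)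

lemma nb_W: "i \<in> {1..r} \<Longrightarrow> NN (W i) = {U, Y s}"
  unfolding nbhd_def H_V_def H_E_def using s3 by (auto simp: doubleton_eq_iff)

lemma nb_Y1: "NN (Y 1) = {Y 2}"
  unfolding nbhd_def H_V_def H_E_def using s3 by (auto simp: doubleton_eq_iff)

lemma nb_Ymid: assumes "1 < j" "j < s" shows "NN (Y j) = {Y (j - 1), Y (Suc j)}"
proof -
  obtain k where k: "j = Suc k" "1 \<le> k" using assms by (cases j) auto
  show ?thesis unfolding k(1) nbhd_def H_V_def H_E_def using s3 assms k
    by (auto simp: doubleton_eq_iff)
qed

lemma nb_Ys: "NN (Y s) = WR \<union> {Y (s - 1)}"
  unfolding nbhd_def H_V_def H_E_def using s3 by (auto simp: doubleton_eq_iff)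

lemma inV: "U \<in> VV" "i \<in> {1..r} \<Longrightarrow> W i \<in> VV" "j \<in> {1..s} \<Longrightarrow> Y j \<in> VV"
  by (auto simp: H_V_def)

lemma VV_cases: "v \<in> VV \<Longrightarrow> v = U \<or> (\<exists>i\<in>{1..r}. v = W i) \<or> (\<exists>j\<in>{1..s}. v = Y j)"
  by (auto simp: H_V_def)

lemma fortD: "fort VV EE F \<Longrightarrow> v \<in> VV \<Longrightarrow> v \<notin> F \<Longrightarrow> card (NN v \<inter> F) \<noteq> 1"
  by (auto simp: fort_def)

lemma card2_int: "a \<noteq> b \<Longrightarrow> card ({a,b} \<inter> F) = 1 \<longleftrightarrow> (a \<in> F) \<noteq> (b \<in> F)"
  by (cases "a \<in> F"; cases "b \<in> F") (auto simp: Int_insert_left)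

lemma fW: "fort VV EE F \<Longrightarrow> i \<in> {1..r} \<Longrightarrow> W i \<notin> F \<Longrightarrow> (U \<in> F \<longleftrightarrow> Y s \<in> F)"
  using fortD[of F "W i"] inV nb_W card2_int[of U "Y s" F] by auto

lemma fY1: "fort VV EE F \<Longrightarrow> Y 1 \<notin> F \<Longrightarrow> Y 2 \<notin> F"
  using fortD[of F "Y 1"] inV(3)[of 1] nb_Y1 s3 by (auto simp: Int_insert_left split: if_splits)

lemma fYmid: "fort VV EE F \<Longrightarrow> 1 < j \<Longrightarrow> j < s \<Longrightarrow> Y j \<notin> F \<Longrightarrow> (Y (j - 1) \<in> F \<longleftrightarrow> Y (Suc j) \<in> F)"
  using fortD[of F "Y j"] inV(3)[of j] nb_Ymid[of j] card2_int[of "Y (j - 1)" "Y (Suc j)" F] by auto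

lemma fU: "fort VV EE F \<Longrightarrow> U \<notin> F \<Longrightarrow> card (WR \<inter> F) \<noteq> 1"
  using fortD[of F U, OF _ inV(1)] unfolding nb_U by blast

lemma fYs: "fort VV EE F \<Longrightarrow> Y s \<notin> F \<Longrightarrow> card ((WR \<union> {Y (s - 1)}) \<inter> F) \<noteq> 1"
  using fortD[of F "Y s", OF _ inV(3)[of s]] s3 unfolding nb_Ys by simp

lemma absent:
  assumes f: "fort VV EE F" and j: "1 \<le> j" "j < s" and a: "Y j \<notin> F" "Y (Suc j) \<notin> F"
    and k: "k \<in> {1..s}"
  shows "Y k \<notin> F"
proof -
  have up: "j + d < s \<longrightarrow> Y (j + d) \<notin> F \<and> Y (Suc (j + d)) \<notin> F" for d
  proof (induction d)
    case 0 then show ?case using a by simp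
  next
    case (Suc d)
    show ?case
    proof
      assume h: "j + Suc d < s"
      have h': "j + d < s" using h by simp
      have a1: "Y (j + d) \<notin> F" and a2: "Y (Suc (j + d)) \<notin> F" using Suc.IH h' by blast+
      have m: "1 < Suc (j + d)" "Suc (j + d) < s" using j h by simp_all
      have "Y (Suc (j + d) - 1) \<in> F \<longleftrightarrow> Y (Suc (Suc (j + d))) \<in> F" by (rule fYmid[OF f m a2])
      hence "Y (Suc (Suc (j + d))) \<notin> F" using a1 by simp
      thus "Y (j + Suc d) \<notin> F \<and> Y (Suc (j + Suc d)) \<notin> F" using a2 by simp
    qed
  qed
  have down: "d < j \<longrightarrow> Y (j - d) \<notin> F \<and> Y (Suc (j - d)) \<notin> F" for d
  proof (induction d)
    case 0 then show ?case using a by simp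
  next
    case (Suc d)
    show ?case
    proof
      assume h: "Suc d < j"
      have h': "d < j" using h by simp
      have a1: "Y (j - d) \<notin> F" and a2: "Y (Suc (j - d)) \<notin> F" using Suc.IH h' by blast+
      have m: "1 < j - d" "j - d < s" using j h by simp_all
      have "Y (j - d - 1) \<in> F \<longleftrightarrow> Y (Suc (j - d)) \<in> F" by (rule fYmid[OF f m a1])
      hence b: "Y (j - d - 1) \<notin> F" using a2 by simp
      have e2: "Suc (j - Suc d) = j - d" using h by simp
      have "Y (Suc (j - Suc d)) \<notin> F" using a1 e2 by simp
      moreover have "Y (j - Suc d) \<notin> F" using b by simp
      ultimately show "Y (j - Suc d) \<notin> F \<and> Y (Suc (j - Suc d)) \<notin> F" by simp
    qed
  qed
  show ?thesis
  proof (cases "k < j")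
    case True
    hence "j - (j - k) = k" "j - k < j" using k by simp_all
    thus ?thesis using down[of "j - k"] by simp
  next
    case False
    show ?thesis
    proof (cases "k < s")
      case True
      hence "j + (k - j) = k" "j + (k - j) < s" using False by simp_all
      thus ?thesis using up[of "k - j"] by simp
    next
      case False
      hence "k = s" using k by simp
      moreover have "Suc (j + (s - 1 - j)) = s" "j + (s - 1 - j) < s" using j by simp_all
      ultimately show ?thesis using up[of "s - 1 - j"] by simp
    qed
  qed
qed

lemma fort_path:
  assumes f: "fort VV EE F" and k: "k \<in> {1..s}" "Y k \<in> F"
  shows "Y 1 \<in> F" "\<And>j. 1 \<le> j \<Longrightarrow> j < s \<Longrightarrow> Y j \<in> F \<or> Y (Suc j) \<in> F"
proof -
  show "Y 1 \<in> F"
  proof (rule ccontr)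
    assume a1: "Y 1 \<notin> F"
    have a2: "Y (Suc 1) \<notin> F" using fY1[OF f a1] by (simp add: numeral_2_eq_2)
    have "(1::nat) \<le> 1" "1 < s" using s3 by simp_all
    from absent[OF f this a1 a2 k(1)] show False using k(2) by blast
  qed
  show "Y j \<in> F \<or> Y (Suc j) \<in> F" if "1 \<le> j" "j < s" for j
  proof (rule ccontr)
    assume "\<not> (Y j \<in> F \<or> Y (Suc j) \<in> F)"
    hence "Y j \<notin> F" "Y (Suc j) \<notin> F" by blast+
    from absent[OF f that this k(1)] show False using k(2) by blast
  qed
qed

lemma W_in_NN: "i \<in> {1..r} \<Longrightarrow> W i \<in> NN v \<longleftrightarrow> (v = U \<or> v = Y s)"
  unfolding nbhd_def H_V_def H_E_def by (auto simp: doubleton_eq_iff)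

lemma fort_pair:
  assumes ij: "i \<in> {1..r}" "j \<in> {1..r}" "i \<noteq> j"
  shows "fort VV EE {W i, W j}"
  unfolding fort_def
proof (intro conjI ballI)
  show "{W i, W j} \<noteq> {}" by simp
  show "{W i, W j} \<subseteq> VV" using ij inV by auto
next
  fix v assume "v \<in> VV - {W i, W j}"
  have "NN v \<inter> {W i, W j} = (if v = U \<or> v = Y s then {W i, W j} else {})"
    using W_in_NN[OF ij(1), of v] W_in_NN[OF ij(2), of v] by auto
  thus "card (NN v \<inter> {W i, W j}) \<noteq> 1" using ij by auto
qed

definition good :: "nat set \<Rightarrow> bool" where
  "good P \<longleftrightarrow> P \<subseteq> {1..s} \<and> 1 \<in> P \<and> s \<in> P \<and> (\<forall>j. 1 \<le> j \<longrightarrow> j < s \<longrightarrow> j \<in> P \<or> Suc j \<in> P)"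

lemma fort_G:
  assumes A: "A \<subseteq> WR" and g: "good P"
  shows "fort VV EE (A \<union> {U} \<union> Y ` P)"
proof -
  let ?G = "A \<union> {U} \<union> Y ` P"
  have gP: "P \<subseteq> {1..s}" "1 \<in> P" "s \<in> P" "\<And>j. 1 \<le> j \<Longrightarrow> j < s \<Longrightarrow> j \<in> P \<or> Suc j \<in> P"
    using g unfolding good_def by blast+
  have UG: "U \<in> ?G" by blast
  have YsG: "Y s \<in> ?G" using gP(3) by blast
  show ?thesis
    unfolding fort_def
  proof (intro conjI ballI)
    show "?G \<noteq> {}" by blast
    show "?G \<subseteq> VV" using A gP(1) inV by blast
  next
    fix v assume v: "v \<in> VV - ?G"
    show "card (NN v \<inter> ?G) \<noteq> 1"
    proof -
      consider "v = U" | i where "i \<in> {1..r}" "v = W i" | t where "t \<in> {1..s}" "v = Y t"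
        using VV_cases v by blast
      thus ?thesis
      proof cases
        case 1 thus ?thesis using v UG by blast
      next
        case 2
        hence "NN v \<inter> ?G = {U, Y s}" using nb_W UG YsG by (simp add: Int_insert_left)
        thus ?thesis by simp
      next
        case 3
        hence tP: "t \<notin> P" using v by blast
        have t1: "t \<noteq> 1" using tP gP(2) by blast
        have ts: "t \<noteq> s" using tP gP(3) by blast
        have t: "1 < t" "t < s" using 3(1) t1 ts by auto
        have "t - 1 \<in> P \<or> Suc (t - 1) \<in> P" using gP(4)[of "t - 1"] t by simp
        hence p1: "t - 1 \<in> P" using tP t by simp
        have p2: "Suc t \<in> P" using gP(4)[of t] t tP by simp
        have "Y (t - 1) \<in> ?G" "Y (Suc t) \<in> ?G" using p1 p2 by blast+
        hence "NN v \<inter> ?G = {Y (t - 1), Y (Suc t)}"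
          using nb_Ymid[OF t] 3(2) by (simp add: Int_insert_left)
        thus ?thesis using t by simp
      qed
    qed
  qed
qed


lemma zf_char:
  "zf_set VV EE B \<longleftrightarrow> B \<subseteq> VV \<and> (\<forall>i\<in>{1..r}. \<forall>j\<in>{1..r}. i \<noteq> j \<longrightarrow> W i \<in> B \<or> W j \<in> B) \<and>
     (U \<in> B \<or> Y 1 \<in> B \<or> Y s \<in> B \<or> (\<exists>j. 1 \<le> j \<and> j < s \<and> Y j \<in> B \<and> Y (Suc j) \<in> B))"
  (is "?L \<longleftrightarrow> ?R")
proof
  assume zf: ?L
  have hit: "F \<inter> B \<noteq> {}" if "fort VV EE F" for F using zf that unfolding zf_iff_forts by blast
  have BV: "B \<subseteq> VV" using zf unfolding zf_set_def by blast
  have pairs: "\<forall>i\<in>{1..r}. \<forall>j\<in>{1..r}. i \<noteq> j \<longrightarrow> W i \<in> B \<or> W j \<in> B"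
  proof (intro ballI impI)
    fix i j assume "i \<in> {1..r}" "j \<in> {1..r}" "i \<noteq> j"
    from hit[OF fort_pair[OF this]] show "W i \<in> B \<or> W j \<in> B" by blast
  qed
  have wit: "U \<in> B \<or> Y 1 \<in> B \<or> Y s \<in> B \<or> (\<exists>j. 1 \<le> j \<and> j < s \<and> Y j \<in> B \<and> Y (Suc j) \<in> B)"
  proof (rule ccontr)
    assume n: "\<not> ?thesis"
    let ?P = "{j \<in> {1..s}. Y j \<notin> B}"
    have "good ?P" unfolding good_def
    proof (intro conjI allI impI)
      show "?P \<subseteq> {1..s}" by blast
      show "1 \<in> ?P" using n s3 by simp
      show "s \<in> ?P" using n s3 by simp
    next
      fix j :: nat assume "1 \<le> j" "j < s"
      thus "j \<in> ?P \<or> Suc j \<in> ?P" using n by auto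
    qed
    from hit[OF fort_G[OF _ this, of "{}"]] n show False by blast
  qed
  show ?R using BV pairs wit by blast
next
  assume R: ?R
  hence BV: "B \<subseteq> VV"
    and pairs: "\<And>i j. i \<in> {1..r} \<Longrightarrow> j \<in> {1..r} \<Longrightarrow> i \<noteq> j \<Longrightarrow> W i \<in> B \<or> W j \<in> B"
    and wit: "U \<in> B \<or> Y 1 \<in> B \<or> Y s \<in> B \<or> (\<exists>j. 1 \<le> j \<and> j < s \<and> Y j \<in> B \<and> Y (Suc j) \<in> B)"
    by blast+
  have "F \<inter> B \<noteq> {}" if f: "fort VV EE F" for F
  proof (cases "\<exists>i\<in>{1..r}. \<exists>j\<in>{1..r}. i \<noteq> j \<and> W i \<in> F \<and> W j \<in> F")
    case True
    then obtain i j where "i \<in> {1..r}" "j \<in> {1..r}" "i \<noteq> j" "W i \<in> F" "W j \<in> F" by blast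
    thus ?thesis using pairs[of i j] by blast
  next
    case False
    hence nd: "\<And>i j. i \<in> {1..r} \<Longrightarrow> j \<in> {1..r} \<Longrightarrow> W i \<in> F \<Longrightarrow> W j \<in> F \<Longrightarrow> i = j" by blast
    obtain i0 where i0: "i0 \<in> {1..r}" "W i0 \<notin> F"
    proof (cases "W 1 \<in> F")
      case True
      hence "W 2 \<notin> F" using nd[of 1 2] r2 by auto
      thus ?thesis using that[of 2] r2 by auto
    next
      case False
      thus ?thesis using that[of 1] r2 by auto
    qed
    have FV: "F \<subseteq> VV" "F \<noteq> {}" using f unfolding fort_def by blast+
    have UF: "U \<in> F"
    proof (rule ccontr)
      assume nU: "U \<notin> F"
      have noW: "WR \<inter> F = {}"
      proof (rule ccontr)
        assume "WR \<inter> F \<noteq> {}"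
        then obtain i where i: "i \<in> {1..r}" "W i \<in> F" by blast
        have "WR \<inter> F = {W i}" using nd i by blast
        thus False using fU[OF f nU] by simp
      qed
      have nYs: "Y s \<notin> F" using fW[OF f i0] nU by blast
      have "(WR \<union> {Y (s - 1)}) \<inter> F = {Y (s - 1)} \<inter> F" using noW by blast
      hence "Y (s - 1) \<notin> F" using fYs[OF f nYs] by (cases "Y (s - 1) \<in> F") auto
      moreover have "Suc (s - 1) = s" "1 \<le> s - 1" "s - 1 < s" using s3 by simp_all
      ultimately have noY: "\<And>k. k \<in> {1..s} \<Longrightarrow> Y k \<notin> F" using absent[OF f, of "s - 1"] nYs by auto
      obtain x where "x \<in> F" using FV by blast
      thus False using VV_cases[of x] FV noW noY nU by blast
    qed
    have YsF: "Y s \<in> F" using fW[OF f i0] UF by blast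
    have sk: "s \<in> {1..s}" using s3 by simp
    note fp = fort_path[OF f sk YsF]
    show ?thesis using wit UF YsF fp by blast
  qed
  thus ?L unfolding zf_iff_forts using BV by blast
qed

lemma card_WR: "card WR = r"
  by (simp add: card_image inj_on_def)

lemma card_W2: "card (W ` {2..r}) = r - 1"
  by (simp add: card_image inj_on_def)

lemma finite_sub: "B \<subseteq> VV \<Longrightarrow> finite B"
  using finV finite_subset by blast

lemma Z_lower:
  assumes zf: "zf_set VV EE B" shows "r \<le> card B"
proof -
  note c = zf[unfolded zf_char]
  have BV: "B \<subseteq> VV" using c by blast
  have finB: "finite B" using finite_sub[OF BV] .
  have "card (WR - B) \<le> Suc 0"
  proof (subst card_le_Suc0_iff_eq)
    show "finite (WR - B)" by simp
    show "\<forall>a1\<in>WR - B. \<forall>a2\<in>WR - B. a1 = a2"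
    proof (intro ballI)
      fix a1 a2 assume "a1 \<in> WR - B" "a2 \<in> WR - B"
      then obtain i j where "i \<in> {1..r}" "j \<in> {1..r}" "a1 = W i" "a2 = W j" "W i \<notin> B" "W j \<notin> B" by blast
      thus "a1 = a2" using c by blast
    qed
  qed
  moreover have "card WR \<le> card (WR \<inter> B) + card (WR - B)"
  proof -
    have "WR = (WR \<inter> B) \<union> (WR - B)" by blast
    hence "card WR = card ((WR \<inter> B) \<union> (WR - B))" by simp
    also have "\<dots> \<le> card (WR \<inter> B) + card (WR - B)" by (rule card_Un_le)
    finally show ?thesis .
  qed
  moreover obtain x where x: "x \<in> B" "x \<notin> WR" using c by blast
  moreover have "card (insert x (WR \<inter> B)) \<le> card B"
    by (rule card_mono[OF finB]) (use x in blast)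
  moreover have "card (insert x (WR \<inter> B)) = Suc (card (WR \<inter> B))"
    using x finB by (simp add: card_insert_if)
  ultimately show ?thesis using card_WR by linarith
qed

definition B0 :: "hvert set" where "B0 = W ` {2..r} \<union> {Y 1}"

lemma B0_zf: "zf_set VV EE B0"
  unfolding zf_char B0_def
proof (intro conjI ballI impI)
  show "W ` {2..r} \<union> {Y 1} \<subseteq> VV" using inV s3 by auto
next
  fix i j assume "i \<in> {1..r}" "j \<in> {1..r}" "i \<noteq> j"
  hence "i \<in> {2..r} \<or> j \<in> {2..r}" by auto
  thus "W i \<in> W ` {2..r} \<union> {Y 1} \<or> W j \<in> W ` {2..r} \<union> {Y 1}" by blast
next
  show "U \<in> W ` {2..r} \<union> {Y 1} \<or> Y 1 \<in> W ` {2..r} \<union> {Y 1} \<or> Y s \<in> W ` {2..r} \<union> {Y 1} \<or>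
    (\<exists>j. 1 \<le> j \<and> j < s \<and> Y j \<in> W ` {2..r} \<union> {Y 1} \<and> Y (Suc j) \<in> W ` {2..r} \<union> {Y 1})" by blast
qed

lemma B0_card: "card B0 = r"
proof -
  have "Y 1 \<notin> W ` {2..r}" by blast
  hence "card B0 = Suc (card (W ` {2..r}))" unfolding B0_def by simp
  thus ?thesis using card_W2 r2 by simp
qed

lemma finite_zf: "finite {B. zf_set VV EE B}"
proof -
  have "{B. zf_set VV EE B} \<subseteq> Pow VV" unfolding zf_set_def by blast
  thus ?thesis using finV finite_subset by blast
qed

lemma Z_val: "Z VV EE = r"
  unfolding Z_def
proof (rule Min_eqI)
  show "finite (card ` {B. zf_set VV EE B})" using finite_zf by simp
  show "\<And>y. y \<in> card ` {B. zf_set VV EE B} \<Longrightarrow> r \<le> y" using Z_lower by blast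
  show "r \<in> card ` {B. zf_set VV EE B}" using B0_zf B0_card by force
qed


lemma Zbar_upper:
  assumes m: "minimal_zf_set VV EE B"
  shows "card B \<le> r + 1 \<and> (s = 3 \<longrightarrow> card B \<le> r)"
proof -
  have zf: "zf_set VV EE B" and mn: "\<And>B'. B' \<subset> B \<Longrightarrow> \<not> zf_set VV EE B'"
    using m unfolding minimal_zf_set_def by blast+
  note c = zf[unfolded zf_char]
  have BV: "B \<subseteq> VV" using c by blast
  define WB where "WB = (if WR \<subseteq> B then W ` {2..r} else WR \<inter> B)"
  have WBB: "WB \<subseteq> B" unfolding WB_def by auto
  have cWB: "card WB \<le> r - 1"
  proof (cases "WR \<subseteq> B")
    case True thus ?thesis unfolding WB_def using card_W2 by simp
  next
    case False
    hence "WR \<inter> B \<subset> WR" by blast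
    hence "card (WR \<inter> B) < card WR" by (rule psubset_card_mono[rotated]) simp
    thus ?thesis unfolding WB_def using False card_WR by simp
  qed
  have pWB: "\<And>i j. i \<in> {1..r} \<Longrightarrow> j \<in> {1..r} \<Longrightarrow> i \<noteq> j \<Longrightarrow> W i \<in> WB \<or> W j \<in> WB"
  proof -
    fix i j assume ij: "i \<in> {1..r}" "j \<in> {1..r}" "i \<noteq> j"
    show "W i \<in> WB \<or> W j \<in> WB"
    proof (cases "WR \<subseteq> B")
      case True
      have "i \<in> {2..r} \<or> j \<in> {2..r}" using ij by auto
      thus ?thesis unfolding WB_def using True by auto
    next
      case False
      thus ?thesis unfolding WB_def using c ij by auto
    qed
  qed
  obtain X where X: "X \<subseteq> B" "card X \<le> 2" "s = 3 \<longrightarrow> card X \<le> 1"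
    "U \<in> X \<or> Y 1 \<in> X \<or> Y s \<in> X \<or> (\<exists>j. 1 \<le> j \<and> j < s \<and> Y j \<in> X \<and> Y (Suc j) \<in> X)"
  proof -
    consider "U \<in> B" | "Y 1 \<in> B" | "Y s \<in> B"
      | j where "U \<notin> B" "Y 1 \<notin> B" "Y s \<notin> B" "1 \<le> j" "j < s" "Y j \<in> B" "Y (Suc j) \<in> B"
      using c by blast
    thus ?thesis
    proof cases
      case 1 thus ?thesis using that[of "{U}"] by simp
    next
      case 2 thus ?thesis using that[of "{Y 1}"] by simp
    next
      case 3 thus ?thesis using that[of "{Y s}"] by simp
    next
      case 4
      have "s \<noteq> 3"
      proof
        assume "s = 3"
        hence "j = 1 \<or> j = 2" using 4 by auto
        thus False using 4 \<open>s = 3\<close> by auto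
      qed
      moreover have "card {Y j, Y (Suc j)} \<le> 2" by (simp add: card_insert_if)
      ultimately show ?thesis using that[of "{Y j, Y (Suc j)}"] 4 by blast
    qed
  qed
  let ?B' = "WB \<union> X"
  have sub: "?B' \<subseteq> B" using WBB X(1) by blast
  have "zf_set VV EE ?B'"
    unfolding zf_char
  proof (intro conjI ballI impI)
    show "?B' \<subseteq> VV" using sub BV by blast
    show "\<And>i j. i \<in> {1..r} \<Longrightarrow> j \<in> {1..r} \<Longrightarrow> i \<noteq> j \<Longrightarrow> W i \<in> ?B' \<or> W j \<in> ?B'"
      using pWB by blast
    show "U \<in> ?B' \<or> Y 1 \<in> ?B' \<or> Y s \<in> ?B' \<or> (\<exists>j. 1 \<le> j \<and> j < s \<and> Y j \<in> ?B' \<and> Y (Suc j) \<in> ?B')"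
      using X(4) by blast
  qed
  hence "\<not> ?B' \<subset> B" using mn by blast
  hence eq: "?B' = B" using sub by blast
  have "card B \<le> card WB + card X" unfolding eq[symmetric] by (rule card_Un_le)
  thus ?thesis using cWB X(2,3) r2 by auto
qed

definition B1 :: "hvert set" where "B1 = W ` {2..r} \<union> {Y 2, Y 3}"

lemma B1_min: assumes s5: "5 \<le> s" shows "minimal_zf_set VV EE B1"
  unfolding minimal_zf_set_def
proof (intro conjI allI impI)
  show "zf_set VV EE B1"
    unfolding zf_char
  proof (intro conjI ballI impI)
    show "B1 \<subseteq> VV" unfolding B1_def using inV s5 by auto
  next
    fix i j assume "i \<in> {1..r}" "j \<in> {1..r}" "i \<noteq> j"
    hence "i \<in> {2..r} \<or> j \<in> {2..r}" by auto
    thus "W i \<in> B1 \<or> W j \<in> B1" unfolding B1_def by blast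
  next
    have "1 \<le> (2::nat) \<and> 2 < s \<and> Y 2 \<in> B1 \<and> Y (Suc 2) \<in> B1" using s5 unfolding B1_def by simp
    thus "U \<in> B1 \<or> Y 1 \<in> B1 \<or> Y s \<in> B1 \<or> (\<exists>j. 1 \<le> j \<and> j < s \<and> Y j \<in> B1 \<and> Y (Suc j) \<in> B1)" by blast
  qed
next
  fix B' assume ps: "B' \<subset> B1"
  show "\<not> zf_set VV EE B'"
  proof
    assume "zf_set VV EE B'"
    note c = this[unfolded zf_char]
    obtain x where x: "x \<in> B1" "x \<notin> B'" using ps by blast
    have nU: "U \<notin> B'" "Y 1 \<notin> B'" "Y s \<notin> B'" using ps s5 unfolding B1_def by auto
    consider i where "i \<in> {2..r}" "x = W i" | "x = Y 2" | "x = Y 3" using x(1) unfolding B1_def by blast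
    thus False
    proof cases
      case 1
      have "W 1 \<notin> B'" using ps unfolding B1_def by auto
      moreover have "1 \<in> {1..r}" "i \<in> {1..r}" "1 \<noteq> i" using 1 r2 by auto
      ultimately show False using c x 1 by blast
    next
      case 2
      obtain j where j: "1 \<le> j" "j < s" "Y j \<in> B'" "Y (Suc j) \<in> B'" using c nU by blast
      have "Y j \<in> B1" "Y (Suc j) \<in> B1" using j ps by blast+
      hence "j \<in> {2, 3}" "Suc j \<in> {2,3}" unfolding B1_def by auto
      hence "j = 2" by auto
      thus False using j x 2 by simp
    next
      case 3
      obtain j where j: "1 \<le> j" "j < s" "Y j \<in> B'" "Y (Suc j) \<in> B'" using c nU by blast
      have "Y j \<in> B1" "Y (Suc j) \<in> B1" using j ps by blast+
      hence "j \<in> {2, 3}" "Suc j \<in> {2,3}" unfolding B1_def by auto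
      hence "j = 2" by auto
      thus False using j x 3 by simp
    qed
  qed
qed

lemma B1_card: "card B1 = r + 1"
proof -
  have "Y 2 \<notin> W ` {2..r}" "Y 3 \<notin> W ` {2..r}" by blast+
  hence "card B1 = Suc (Suc (card (W ` {2..r})))" unfolding B1_def by (simp add: card_insert_if)
  thus ?thesis using card_W2 r2 by simp
qed

lemma B0_min: "minimal_zf_set VV EE B0"
  unfolding minimal_zf_set_def
proof (intro conjI allI impI)
  show "zf_set VV EE B0" by (rule B0_zf)
next
  fix B' assume ps: "B' \<subset> B0"
  have "finite B0" unfolding B0_def by simp
  hence "card B' < r" using psubset_card_mono[OF _ ps] B0_card by simp
  thus "\<not> zf_set VV EE B'" using Z_lower by (meson not_le)
qed

lemma finite_min: "finite {B. minimal_zf_set VV EE B}"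
proof -
  have "{B. minimal_zf_set VV EE B} \<subseteq> Pow VV" unfolding minimal_zf_set_def zf_set_def by blast
  thus ?thesis using finV finite_subset by blast
qed

lemma Zbar5: assumes "5 \<le> s" shows "Zbar VV EE = r + 1"
  unfolding Zbar_def
proof (rule Max_eqI)
  show "finite (card ` {B. minimal_zf_set VV EE B})" using finite_min by simp
  show "\<And>y. y \<in> card ` {B. minimal_zf_set VV EE B} \<Longrightarrow> y \<le> r + 1" using Zbar_upper by blast
  show "r + 1 \<in> card ` {B. minimal_zf_set VV EE B}" using B1_min[OF assms] B1_card by force
qed

lemma Zbar3: assumes "s = 3" shows "Zbar VV EE = r"
  unfolding Zbar_def
proof (rule Max_eqI)
  show "finite (card ` {B. minimal_zf_set VV EE B})" using finite_min by simp
  show "\<And>y. y \<in> card ` {B. minimal_zf_set VV EE B} \<Longrightarrow> y \<le> r" using Zbar_upper assms by blast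
  show "r \<in> card ` {B. minimal_zf_set VV EE B}" using B0_min B0_card by force
qed


lemma U_in_NN: "U \<in> NN v \<longleftrightarrow> (\<exists>i\<in>{1..r}. v = W i)"
  unfolding nbhd_def H_V_def H_E_def by (auto simp: doubleton_eq_iff)

lemma good_mono: "good P \<Longrightarrow> P \<subseteq> Q \<Longrightarrow> Q \<subseteq> {1..s} \<Longrightarrow> good Q"
  unfolding good_def by blast

definition Odd :: "nat set" where "Odd = {j \<in> {1..s}. odd j}"
definition Ev :: "nat set" where "Ev = {j \<in> {1..s}. even j}"

lemma good_Odd: assumes "odd s" shows "good Odd"
  unfolding good_def Odd_def using assms s3 by auto

lemma good_Odd_ins: assumes "odd s" "j \<in> {1..s}" shows "good (insert j Odd)"
  by (rule good_mono[OF good_Odd[OF assms(1)]]) (use assms(2) in \<open>auto simp: Odd_def\<close>)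

lemma two_forts:
  assumes os: "odd s" and x: "x \<in> VV"
  shows "\<exists>F1 F2. fort VV EE F1 \<and> fort VV EE F2 \<and> F1 \<inter> F2 = {} \<and> x \<in> F1"
proof -
  have r12: "(1::nat) \<in> {1..r}" "(2::nat) \<in> {1..r}" "(1::nat) \<noteq> 2" using r2 by auto
  have fp12: "fort VV EE {W 1, W 2}" using fort_pair[OF r12] .
  have fO: "fort VV EE ({} \<union> {U} \<union> Y ` Odd)" using fort_G[OF _ good_Odd[OF os]] by blast
  consider "x = U" | i where "i \<in> {1..r}" "x = W i" | j where "j \<in> {1..s}" "x = Y j"
    using VV_cases[OF x] by blast
  thus ?thesis
  proof cases
    case 1
    show ?thesis
      by (rule exI[of _ "{} \<union> {U} \<union> Y ` Odd"], rule exI[of _ "{W 1, W 2}"]) (use fO fp12 1 in blast)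
  next
    case 2
    define i' where "i' = (if i = 1 then 2 else (1::nat))"
    have "i' \<in> {1..r}" "i \<noteq> i'" using 2 r2 unfolding i'_def by auto
    hence "fort VV EE {W i, W i'}" using fort_pair 2 by blast
    thus ?thesis
      by (intro exI[of _ "{W i, W i'}"] exI[of _ "{} \<union> {U} \<union> Y ` Odd"]) (use fO 2 in blast)
  next
    case 3
    have "fort VV EE ({} \<union> {U} \<union> Y ` (insert j Odd))"
      using fort_G[OF _ good_Odd_ins[OF os 3(1)]] by blast
    thus ?thesis
      by (intro exI[of _ "{} \<union> {U} \<union> Y ` (insert j Odd)"] exI[of _ "{W 1, W 2}"]) (use fp12 3 in blast)
  qed
qed

lemma small_not_max:
  assumes os: "odd s" and m: "maximal_ZIr_set VV EE S" shows "2 \<le> card S"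
proof (rule ccontr)
  assume "\<not> 2 \<le> card S"
  hence c: "card S \<le> 1" by simp
  have SV: "S \<subseteq> VV" using m unfolding maximal_ZIr_set_def ZIr_set_def by blast
  have finS: "finite S" using finite_sub[OF SV] .
  obtain x where x: "x \<in> VV" "S \<subseteq> {x}"
  proof (cases "S = {}")
    case True thus ?thesis using that[of U] inV by blast
  next
    case False
    then obtain x where "S = {x}" using c finS by (metis card_0_eq card_1_singleton_iff le_Suc_eq One_nat_def le_zero_eq)
    thus ?thesis using that[of x] SV by blast
  qed
  obtain F1 F2 where F: "fort VV EE F1" "fort VV EE F2" "F1 \<inter> F2 = {}" "x \<in> F1"
    using two_forts[OF os x(1)] by blast
  obtain y where y: "y \<in> F2" using F(2) unfolding fort_def by blast
  have yV: "y \<in> VV" using F(2) y unfolding fort_def by blast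
  have xy: "x \<noteq> y" using F y by blast
  have "ZIr_set VV EE {x, y}"
    unfolding ZIr_set_def
  proof (intro conjI ballI)
    show "{x, y} \<subseteq> VV" using x yV by blast
  next
    fix z assume "z \<in> {x, y}"
    thus "\<exists>F. fort VV EE F \<and> {x, y} \<inter> F = {z}"
    proof
      assume "z = x"
      thus ?thesis using F y by (intro exI[of _ F1]) blast
    next
      assume "z \<in> {y}"
      thus ?thesis using F y by (intro exI[of _ F2]) blast
    qed
  qed
  moreover have "S \<subset> {x, y}" using x xy by blast
  moreover have "{x, y} \<subseteq> VV" using x yV by blast
  ultimately show False using m unfolding maximal_ZIr_set_def by blast
qed

lemma fort_noY1: "fort VV EE F \<Longrightarrow> Y 1 \<notin> F \<Longrightarrow> k \<in> {1..s} \<Longrightarrow> Y k \<notin> F"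
  using fort_path(1) by blast

lemma fort_UW:
  assumes f: "fort VV EE F" and u: "U \<in> F" and y: "Y 1 \<notin> F"
  shows "WR \<subseteq> F"
proof
  fix w assume "w \<in> WR"
  then obtain i where i: "i \<in> {1..r}" "w = W i" by blast
  have "Y s \<notin> F" using fort_noY1[OF f y, of s] s3 by simp
  thus "w \<in> F" using fW[OF f i(1)] u i(2) by blast
qed

lemma fort_FU: "fort VV EE (insert U WR)"
  unfolding fort_def
proof (intro conjI ballI)
  show "insert U WR \<noteq> {}" by simp
  show "insert U WR \<subseteq> VV" using inV by blast
next
  fix v assume v: "v \<in> VV - insert U WR"
  then obtain t where t: "t \<in> {1..s}" "v = Y t" using VV_cases by blast
  have nU: "U \<notin> NN v" using U_in_NN t by simp
  show "card (NN v \<inter> insert U WR) \<noteq> 1"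
  proof (cases "t = s")
    case True
    hence "NN v \<inter> insert U WR = WR" using nU W_in_NN t by blast
    thus ?thesis using card_WR r2 by simp
  next
    case False
    hence "NN v \<inter> insert U WR = {}" using nU W_in_NN t by blast
    thus ?thesis by simp
  qed
qed

lemma fort_FY: "fort VV EE (VV - {U})"
  unfolding fort_def
proof (intro conjI ballI)
  show "VV - {U} \<noteq> {}" using inV(2)[of 1] r2 by auto
  show "VV - {U} \<subseteq> VV" by blast
next
  fix v assume v: "v \<in> VV - (VV - {U})"
  hence "v = U" by blast
  hence "NN v \<inter> (VV - {U}) = WR" using nb_U inV by auto
  thus "card (NN v \<inter> (VV - {U})) \<noteq> 1" using card_WR r2 by simp
qed

lemma UY1_max: "maximal_ZIr_set VV EE {U, Y 1}"
  unfolding maximal_ZIr_set_def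
proof (intro conjI allI impI)
  have Y1V: "Y 1 \<in> VV" using inV(3)[of 1] s3 by simp
  have Y1W: "Y 1 \<notin> insert U WR" by auto
  have UFY: "U \<notin> VV - {U}" by simp
  show "ZIr_set VV EE {U, Y 1}"
    unfolding ZIr_set_def
  proof (intro conjI ballI)
    show "{U, Y 1} \<subseteq> VV" using inV(1) Y1V by simp
  next
    fix z assume "z \<in> {U, Y 1}"
    thus "\<exists>F. fort VV EE F \<and> {U, Y 1} \<inter> F = {z}"
    proof
      assume "z = U"
      moreover have "{U, Y 1} \<inter> insert U WR = {U}" using Y1W by auto
      ultimately show ?thesis using fort_FU by blast
    next
      assume "z \<in> {Y 1}"
      moreover have "{U, Y 1} \<inter> (VV - {U}) = {Y 1}" using Y1V by auto
      ultimately show ?thesis using fort_FY by auto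
    qed
  qed
next
  fix S' assume ps: "{U, Y 1} \<subset> S'" and SV: "S' \<subseteq> VV"
  have US: "U \<in> S'" and Y1S: "Y 1 \<in> S'" using ps by blast+
  have priv: "\<And>x. x \<in> S' \<Longrightarrow> ZIr_set VV EE S' \<Longrightarrow> \<exists>F. fort VV EE F \<and> S' \<inter> F = {x}"
    unfolding ZIr_set_def by blast
  show "\<not> ZIr_set VV EE S'"
  proof
    assume z: "ZIr_set VV EE S'"
    obtain x where "x \<in> S' - {U, Y 1}" using psubset_imp_ex_mem[OF ps] by blast
    hence x: "x \<in> S'" "x \<noteq> U" "x \<noteq> Y 1" by simp_all
    have xV: "x \<in> VV" using x SV by auto
    consider i where "i \<in> {1..r}" "x = W i" | j where "j \<in> {1..s}" "x = Y j"
      using VV_cases[OF xV] x(2) by auto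
    thus False
    proof cases
      case 1
      obtain F where F: "fort VV EE F" "S' \<inter> F = {U}" using priv[OF US z] by blast
      have nY: "Y 1 \<notin> F"
      proof
        assume "Y 1 \<in> F"
        hence "Y 1 \<in> S' \<inter> F" using Y1S by simp
        hence "Y 1 = U" using F(2) by simp
        thus False by simp
      qed
      have "U \<in> S' \<inter> F" using F(2) by simp
      hence UF: "U \<in> F" by simp
      have WF: "WR \<subseteq> F" by (rule fort_UW[OF F(1) UF nY])
      have xW: "x \<in> WR" using 1 by simp
      have "x \<in> F" using WF xW by (rule subsetD)
      hence "x \<in> S' \<inter> F" by (rule IntI[OF x(1)])
      hence "x \<in> {U}" unfolding F(2) .
      hence "x = U" by (rule singletonD)
      thus False using x(2) by (rule notE[rotated])
    next
      case 2
      obtain F where F: "fort VV EE F" "S' \<inter> F = {Y j}" using priv[OF x(1) z] 2 by blast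
      have j1: "j \<noteq> 1" using x(3) 2 by simp
      have nY: "Y 1 \<notin> F"
      proof
        assume "Y 1 \<in> F"
        hence "Y 1 \<in> S' \<inter> F" by (rule IntI[OF Y1S])
        hence "Y 1 \<in> {Y j}" unfolding F(2) .
        hence "Y 1 = Y j" by (rule singletonD)
        thus False using j1 by simp
      qed
      have "Y j \<notin> F" by (rule fort_noY1[OF F(1) nY 2(1)])
      moreover have "Y j \<in> S' \<inter> F" unfolding F(2) by simp
      ultimately show False by simp
    qed
  qed
qed

lemma finite_max: "finite {S. maximal_ZIr_set VV EE S}"
proof -
  have "{S. maximal_ZIr_set VV EE S} \<subseteq> Pow VV" unfolding maximal_ZIr_set_def ZIr_set_def by blast
  thus ?thesis using finV finite_subset by blast
qed

lemma zir_val: assumes "odd s" shows "zir VV EE = 2"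
  unfolding zir_def
proof (rule Min_eqI)
  show "finite (card ` {S. maximal_ZIr_set VV EE S})" using finite_max by simp
  show "\<And>y. y \<in> card ` {S. maximal_ZIr_set VV EE S} \<Longrightarrow> 2 \<le> y" using small_not_max[OF assms] by blast
  have "card {U, Y 1} = 2" by simp
  thus "2 \<in> card ` {S. maximal_ZIr_set VV EE S}" using UY1_max by force
qed

lemma indep_card:
  "T \<subseteq> {a..<a + 2 * m} \<Longrightarrow> (\<forall>k\<in>T. Suc k \<notin> T) \<Longrightarrow> card T \<le> m"
proof (induction m arbitrary: a T)
  case 0
  hence "T = {}" by auto
  thus ?case by simp
next
  case (Suc m)
  let ?T1 = "T \<inter> {a, Suc a}"
  let ?T2 = "T \<inter> {a + 2..<(a + 2) + 2 * m}"
  have "T \<subseteq> ?T1 \<union> ?T2" using Suc.prems(1) by auto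
  hence "card T \<le> card (?T1 \<union> ?T2)" by (intro card_mono) auto
  also have "\<dots> \<le> card ?T1 + card ?T2" by (rule card_Un_le)
  also have "card ?T2 \<le> m" by (rule Suc.IH) (use Suc.prems(2) in auto)
  also have "card ?T1 \<le> 1"
  proof (cases "a \<in> T")
    case True
    hence "Suc a \<notin> T" using Suc.prems(2) by blast
    hence "?T1 = {a}" using True by auto
    thus ?thesis by simp
  next
    case False
    hence "?T1 \<subseteq> {Suc a}" by auto
    thus ?thesis using card_mono[of "{Suc a}" ?T1] by simp
  qed
  finally show ?case by simp
qed

lemma L0:
  assumes f: "fort VV EE F" and k: "k \<in> {1..s}" "Y k \<in> F" and sm: "s = 2 * m + 1"
    and T: "T \<subseteq> {1..s}" "\<forall>t\<in>T. Y t \<notin> F"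
  shows "card T \<le> m"
proof -
  note fp = fort_path[OF f k]
  have "T \<subseteq> {2..<2 + 2 * m}"
  proof
    fix t assume t: "t \<in> T"
    hence "t \<noteq> 1" using fp(1) T(2) by metis
    thus "t \<in> {2..<2 + 2 * m}" using t T(1) sm by auto
  qed
  moreover have "\<forall>t\<in>T. Suc t \<notin> T"
  proof (intro ballI notI)
    fix t assume t: "t \<in> T" "Suc t \<in> T"
    hence "1 \<le> t" "t < s" using T(1) by auto
    from fp(2)[OF this] show False using t T(2) by metis
  qed
  ultimately show ?thesis by (rule indep_card)
qed

lemma L1:
  assumes z: "ZIr_set VV EE S" and sm: "s = 2 * m + 1"
  shows "card {j \<in> {1..s}. Y j \<in> S} \<le> m + 1"
proof (cases "{j \<in> {1..s}. Y j \<in> S} = {}")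
  case True show ?thesis unfolding True by simp
next
  case False
  let ?SY = "{j \<in> {1..s}. Y j \<in> S}"
  obtain j where j: "j \<in> ?SY" using False by blast
  have jS: "Y j \<in> S" using j by simp
  obtain F where F: "fort VV EE F" "S \<inter> F = {Y j}" using z jS unfolding ZIr_set_def by blast
  have "Y j \<in> S \<inter> F" unfolding F(2) by simp
  hence YjF: "Y j \<in> F" by simp
  have "\<forall>t\<in>?SY - {j}. Y t \<notin> F"
  proof (intro ballI notI)
    fix t assume t: "t \<in> ?SY - {j}" "Y t \<in> F"
    hence "Y t \<in> S \<inter> F" by simp
    hence "Y t = Y j" unfolding F(2) by simp
    thus False using t by simp
  qed
  moreover have "?SY - {j} \<subseteq> {1..s}" by blast
  moreover have "j \<in> {1..s}" using j by simp
  ultimately have "card (?SY - {j}) \<le> m" using L0[OF F(1) _ YjF sm] by blast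
  moreover have "finite ?SY" by (rule finite_subset[of _ "{1..s}"]) auto
  hence "card ?SY = Suc (card (?SY - {j}))"
    using j by (intro card_Suc_Diff1[symmetric])
  ultimately show ?thesis by simp
qed

lemma L2:
  assumes f: "fort VV EE F" and u: "U \<in> F" and i: "i \<in> {1..r}" "W i \<notin> F" and sm: "s = 2 * m + 1"
    and T: "T \<subseteq> {1..s}" "\<forall>t\<in>T. Y t \<notin> F"
  shows "card T \<le> m"
proof -
  have "Y s \<in> F" using fW[OF f i] u by simp
  moreover have "s \<in> {1..s}" using s3 by simp
  ultimately show ?thesis using L0[OF f _ _ sm T] by blast
qed

lemma ZIR_upper:
  assumes z: "ZIr_set VV EE S" and sm: "s = 2 * m + 1"
  shows "card S \<le> r + m"
proof -
  have SV: "S \<subseteq> VV" using z unfolding ZIr_set_def by blast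
  have priv: "\<And>x. x \<in> S \<Longrightarrow> \<exists>F. fort VV EE F \<and> S \<inter> F = {x}" using z unfolding ZIr_set_def by blast
  define SW where "SW = S \<inter> WR"
  define SY where "SY = {j \<in> {1..s}. Y j \<in> S}"
  define SU where "SU = S \<inter> {U}"
  have "S \<subseteq> SU \<union> SW \<union> Y ` SY"
  proof
    fix x assume x: "x \<in> S"
    hence "x \<in> VV" using SV by blast
    from VV_cases[OF this] show "x \<in> SU \<union> SW \<union> Y ` SY"
      using x unfolding SU_def SW_def SY_def by auto
  qed
  hence "card S \<le> card (SU \<union> SW \<union> Y ` SY)" by (intro card_mono) (auto simp: SU_def SW_def SY_def)
  also have "\<dots> \<le> card (SU \<union> SW) + card (Y ` SY)" by (rule card_Un_le)
  also have "\<dots> \<le> card SU + card SW + card SY"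
    using card_Un_le[of SU SW] card_image_le[of SY Y] by (simp add: SY_def)
  finally have tot: "card S \<le> card SU + card SW + card SY" .
  have cSY1: "card SY \<le> m + 1" unfolding SY_def by (rule L1[OF z sm])
  have cSW: "card SW \<le> r" unfolding SW_def using card_mono[of WR "S \<inter> WR"] card_WR by simp
  have cSU: "card SU \<le> 1" unfolding SU_def using card_mono[of "{U}" "S \<inter> {U}"] by simp
  have SYs: "SY \<subseteq> {1..s}" unfolding SY_def by blast
  show ?thesis
  proof (cases "WR \<subseteq> S")
    case True
    have W1S: "W 1 \<in> S" "W 2 \<in> S" using True r2 by auto
    obtain F where F: "fort VV EE F" "S \<inter> F = {W 1}" using priv[OF W1S(1)] by blast
    have "W 1 \<in> S \<inter> F" unfolding F(2) by simp
    hence W1F: "W 1 \<in> F" by simp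
    have W2F: "W 2 \<notin> F"
    proof
      assume "W 2 \<in> F"
      hence "W 2 \<in> S \<inter> F" using W1S by simp
      thus False unfolding F(2) by simp
    qed
    have UF: "U \<in> F"
    proof (rule ccontr)
      assume nU: "U \<notin> F"
      have "WR \<inter> F = {W 1}"
      proof
        show "WR \<inter> F \<subseteq> {W 1}" using True F(2) by blast
        show "{W 1} \<subseteq> WR \<inter> F" using W1F r2 by auto
      qed
      thus False using fU[OF F(1) nU] by simp
    qed
    have "U \<notin> S"
    proof
      assume "U \<in> S"
      hence "U \<in> S \<inter> F" using UF by simp
      thus False unfolding F(2) by simp
    qed
    hence "SU = {}" unfolding SU_def by blast
    moreover have "\<forall>t\<in>SY. Y t \<notin> F"
    proof (intro ballI notI)
      fix t assume "t \<in> SY" "Y t \<in> F"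
      hence "Y t \<in> S \<inter> F" unfolding SY_def by simp
      thus False unfolding F(2) by simp
    qed
    hence "card SY \<le> m" using L2[OF F(1) UF _ W2F sm SYs] r2 by simp
    ultimately show ?thesis using tot cSW by simp
  next
    case False
    hence "SW \<subset> WR" unfolding SW_def by blast
    hence "card SW < card WR" by (rule psubset_card_mono[rotated]) simp
    hence cSW': "card SW \<le> r - 1" using card_WR by simp
    show ?thesis
    proof (cases "U \<in> S")
      case US: True
      show ?thesis
      proof (cases "SW = {}")
        case True
        thus ?thesis using tot cSU cSY1 r2 by simp
      next
        case False
        then obtain w where w: "w \<in> SW" by blast
        then obtain i where i: "i \<in> {1..r}" "w = W i" unfolding SW_def by blast
        obtain F where F: "fort VV EE F" "S \<inter> F = {U}" using priv[OF US] by blast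
        have "U \<in> S \<inter> F" unfolding F(2) by simp
        hence UF: "U \<in> F" by simp
        have WF: "W i \<notin> F"
        proof
          assume "W i \<in> F"
          hence "W i \<in> S \<inter> F" using w i unfolding SW_def by simp
          thus False unfolding F(2) by simp
        qed
        have "\<forall>t\<in>SY. Y t \<notin> F"
        proof (intro ballI notI)
          fix t assume "t \<in> SY" "Y t \<in> F"
          hence "Y t \<in> S \<inter> F" unfolding SY_def by simp
          thus False unfolding F(2) by simp
        qed
        hence "card SY \<le> m" using L2[OF F(1) UF i(1) WF sm SYs] by simp
        thus ?thesis using tot cSU cSW' r2 by simp
      qed
    next
      case False
      hence "SU = {}" unfolding SU_def by blast
      thus ?thesis using tot cSW' cSY1 r2 by simp
    qed
  qed
qed


lemma Ev_eq: assumes sm: "s = 2 * m + 1" shows "Ev = (\<lambda>k. 2 * k) ` {1..m}"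
proof
  show "Ev \<subseteq> (\<lambda>k. 2 * k) ` {1..m}"
  proof
    fix j assume "j \<in> Ev"
    hence j: "1 \<le> j" "j \<le> s" "even j" unfolding Ev_def by auto
    hence "j = 2 * (j div 2)" by simp
    moreover have "j div 2 \<in> {1..m}" using j sm by auto
    ultimately show "j \<in> (\<lambda>k. 2 * k) ` {1..m}" by (rule image_eqI)
  qed
  show "(\<lambda>k. 2 * k) ` {1..m} \<subseteq> Ev" unfolding Ev_def using sm by auto
qed

lemma card_Ev: assumes sm: "s = 2 * m + 1" shows "card Ev = m"
  unfolding Ev_eq[OF sm] by (subst card_image) (auto simp: inj_on_def)

definition S0 :: "hvert set" where "S0 = WR \<union> Y ` Ev"

lemma S0_mem: "U \<notin> S0" "W n \<in> S0 \<longleftrightarrow> n \<in> {1..r}" "Y n \<in> S0 \<longleftrightarrow> n \<in> Ev"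
  unfolding S0_def by auto

lemma Odd_Ev: "n \<in> Odd \<Longrightarrow> n \<notin> Ev"
  unfolding Odd_def Ev_def by auto

lemma S0_ZIr: assumes os: "odd s" shows "ZIr_set VV EE S0"
  unfolding ZIr_set_def
proof (intro conjI ballI)
  show "S0 \<subseteq> VV" unfolding S0_def Ev_def using inV by auto
next
  fix x assume x: "x \<in> S0"
  consider i where "i \<in> {1..r}" "x = W i" | j where "j \<in> Ev" "x = Y j"
    using x unfolding S0_def by blast
  thus "\<exists>F. fort VV EE F \<and> S0 \<inter> F = {x}"
  proof cases
    case 1
    let ?F = "{W i} \<union> {U} \<union> Y ` Odd"
    have f: "fort VV EE ?F" by (rule fort_G) (use 1 good_Odd[OF os] in auto)
    have "S0 \<inter> ?F = {x}"
    proof (rule set_eqI)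
      fix z show "z \<in> S0 \<inter> ?F \<longleftrightarrow> z \<in> {x}"
        using 1 Odd_Ev by (cases z) (auto simp: S0_mem)
    qed
    thus ?thesis using f by blast
  next
    case 2
    let ?F = "{} \<union> {U} \<union> Y ` (insert j Odd)"
    have jr: "j \<in> {1..s}" using 2 unfolding Ev_def by simp
    have f: "fort VV EE ?F" by (rule fort_G) (use good_Odd_ins[OF os jr] in auto)
    have "S0 \<inter> ?F = {x}"
    proof (rule set_eqI)
      fix z show "z \<in> S0 \<inter> ?F \<longleftrightarrow> z \<in> {x}"
        using 2 Odd_Ev by (cases z) (auto simp: S0_mem)
    qed
    thus ?thesis using f by blast
  qed
qed

lemma S0_card: assumes sm: "s = 2 * m + 1" shows "card S0 = r + m"
proof -
  have "WR \<inter> Y ` Ev = {}" by auto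
  moreover have "finite (Y ` Ev)" unfolding Ev_def by simp
  ultimately have "card S0 = card WR + card (Y ` Ev)" unfolding S0_def
    by (intro card_Un_disjoint) auto
  moreover have "card (Y ` Ev) = card Ev" by (rule card_image) (simp add: inj_on_def)
  ultimately show ?thesis using card_WR card_Ev[OF sm] by simp
qed

lemma ZIR_val: assumes sm: "s = 2 * m + 1" shows "ZIR VV EE = r + m"
  unfolding ZIR_def
proof (rule Max_eqI)
  have os: "odd s" using sm by simp
  show "finite (card ` {S. maximal_ZIr_set VV EE S})" using finite_max by simp
  show "\<And>y. y \<in> card ` {S. maximal_ZIr_set VV EE S} \<Longrightarrow> y \<le> r + m"
    using ZIR_upper[OF _ sm] unfolding maximal_ZIr_set_def by blast
  have "maximal_ZIr_set VV EE S0"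
    unfolding maximal_ZIr_set_def
  proof (intro conjI allI impI)
    show "ZIr_set VV EE S0" by (rule S0_ZIr[OF os])
  next
    fix S' assume ps: "S0 \<subset> S'" and SV: "S' \<subseteq> VV"
    have lt: "card S0 < card S'" by (rule psubset_card_mono[OF finite_sub[OF SV] ps])
    show "\<not> ZIr_set VV EE S'"
    proof
      assume "ZIr_set VV EE S'"
      hence "card S' \<le> r + m" by (rule ZIR_upper[OF _ sm])
      thus False using lt S0_card[OF sm] by simp
    qed
  qed
  thus "r + m \<in> card ` {S. maximal_ZIr_set VV EE S}" using S0_card[OF sm] by force
qed

end

theorem proposition3p6:
  shows "(\<forall>r s::nat. 2 \<le> r \<and> odd s \<and> 3 \<le> s \<longrightarrow>
            zir (H_V r s) (H_E r s) = 2 \<and>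
            Z (H_V r s) (H_E r s) = r \<and>
            ZIR (H_V r s) (H_E r s) = r + (s - 1) div 2)
       \<and> (\<forall>r s::nat. 2 \<le> r \<and> odd s \<and> 5 \<le> s \<longrightarrow> Zbar (H_V r s) (H_E r s) = r + 1)
       \<and> (\<forall>r::nat. 2 \<le> r \<longrightarrow> Zbar (H_V r 3) (H_E r 3) = r)"
proof (intro conjI)
  show "\<forall>r s::nat. 2 \<le> r \<and> odd s \<and> 3 \<le> s \<longrightarrow>
            zir (H_V r s) (H_E r s) = 2 \<and>
            Z (H_V r s) (H_E r s) = r \<and>
            ZIR (H_V r s) (H_E r s) = r + (s - 1) div 2"
  proof (intro allI impI)
    fix r s :: nat assume h: "2 \<le> r \<and> odd s \<and> 3 \<le> s"
    interpret HG r s using h by unfold_locales auto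
    obtain m where sm: "s = 2 * m + 1" using h by (metis oddE)
    have "(s - 1) div 2 = m" using sm by simp
    thus "zir (H_V r s) (H_E r s) = 2 \<and> Z (H_V r s) (H_E r s) = r \<and>
          ZIR (H_V r s) (H_E r s) = r + (s - 1) div 2"
      using zir_val Z_val ZIR_val[OF sm] h by simp
  qed
  show "\<forall>r s::nat. 2 \<le> r \<and> odd s \<and> 5 \<le> s \<longrightarrow> Zbar (H_V r s) (H_E r s) = r + 1"
  proof (intro allI impI)
    fix r s :: nat assume h: "2 \<le> r \<and> odd s \<and> 5 \<le> s"
    interpret HG r s using h by unfold_locales auto
    show "Zbar (H_V r s) (H_E r s) = r + 1" using Zbar5 h by simp
  qed
  show "\<forall>r::nat. 2 \<le> r \<longrightarrow> Zbar (H_V r 3) (H_E r 3) = r"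
  proof (intro allI impI)
    fix r :: nat assume h: "2 \<le> r"
    interpret HG r 3 using h by unfold_locales auto
    show "Zbar (H_V r 3) (H_E r 3) = r" using Zbar3 by simp
  qed
qed

end
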